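(* Let an FCA with state set $S$, neighborhood $m=l+1+r$, local rule $f$ and boundary type $b\in\{\text{null},\text{periodic}\}$ be given, and let $G$ be its reversibility graph. If $N$ is a negative vertex of $G$ with value $k\ge1$ and some circuit of length $r'$ passes through $N$, then for every integer $x\ge 0$ the FCA is not $(k+xr')$-cell-reversible.
   Context: A one-dimensional finite cellular automaton (FCA) is given by a state set $S=\{0,1,\dots,s-1\}$, integers $l,r\ge 0$ with neighborhood size $m=l+1+r\ge 2$, a local rule $f:S^m\to S$, and a boundary type $b\in\{\text{null},\text{periodic}\}$. For $n\ge 1$ the global map $\tau_n:S^n\to S^n$ sends $(x_0,\dots,x_{n-1})$ to $(y_0,\dots,y_{n-1})$ with $y_i=f(x_{i-l},\dots,x_{i+r})$, where for the null boundary $x_j=0$ whenever $j<0$ or $j>n-1$, and for the periodic boundary indices are taken modulo $n$. The FCA is $n$-cell-reversible if $\tau_n$ is a bijection (equivalently, since $S^n$ is finite, surjective). Reversibility graph (RG). Null boundary: vertices are subsets of $S^{m-1}$; the root is $N_0=\{(a_1,\dots,a_{m-1})\in S^{m-1}: a_1=\dots=a_l=0\}$; the acceptance set is $R=\{(a_1,\dots,a_{m-1})\in S^{m-1}: a_{m-r}=\dots=a_{m-1}=0\}$ (so $R=S^{m-1}$ if $r=0$); for a subset $N$ and $c\in S$, $\delta(N,c)=\{(a_1,\dots,a_{m-1})\in S^{m-1}:\exists a_0\in S,\ (a_0,\dots,a_{m-2})\in N,\ f(a_0,a_1,\dots,a_{m-1})=c\}$. Periodic boundary: vertices are subsets of $S^{m-1}\times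 S^{m-1}$; the root and the acceptance set are $N_0=R=\{(a,a):a\in S^{m-1}\}$; $\delta(N,c)=\{((a_1,\dots,a_{m-1}),(b_1,\dots,b_{m-1})):\exists b_0\in S,\ ((a_1,\dots,a_{m-1}),(b_0,\dots,b_{m-2}))\in N,\ f(b_0,\dots,b_{m-1})=c\}$. In both cases the RG is the directed graph whose vertex set consists of all subsets obtainable from $N_0$ by repeatedly applying $\delta$ (including $N_0$; equal subsets are the same vertex; the empty set may occur), with, for each vertex $N$ and each $c\in S$, an edge labelled $c$ from $N$ to $\delta(N,c)$. The value of a vertex $N$ is the length of a shortest directed path from $N_0$ to $N$. A vertex $N$ is negative if $N\cap R=\emptyset$. A circuit is an elementary directed cycle of the RG (a closed directed path with no repeated vertex other than its start = end; a loop is a circuit of length $1$); its length is its number of edges, and it passes through $N$ if $N$ is one of its vertices. *)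

theory Defs
  imports Main
begin

text \<open>States are S = {0..<s}; a configuration of n cells is a list of length n over S.
  The local rule f takes a list of length m = l+1+r (the neighbourhood x_{i-l},...,x_{i+r}).\<close>

datatype boundary = Null | Periodic

definition words :: "nat \<Rightarrow> nat \<Rightarrow> nat list set" where
  "words s n = {xs. length xs = n \<and> set xs \<subseteq> {..<s}}"

definition valid_fca :: "nat \<Rightarrow> nat \<Rightarrow> nat \<Rightarrow> (nat list \<Rightarrow> nat) \<Rightarrow> bool" where
  "valid_fca s l r f \<longleftrightarrow> 1 \<le> s \<and> 2 \<le> l + 1 + r \<and> (\<forall>xs \<in> words s (l + 1 + r). f xs < s)"

fun cell :: "boundary \<Rightarrow> nat \<Rightarrow> nat list \<Rightarrow> int \<Rightarrow> nat" where
  "cell Null n xs j = (if 0 \<le> j \<and> j < int n then xs ! nat j else 0)"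
| "cell Periodic n xs j = xs ! nat (j mod int n)"

definition global_map :: "nat \<Rightarrow> nat \<Rightarrow> (nat list \<Rightarrow> nat) \<Rightarrow> boundary \<Rightarrow> nat \<Rightarrow> nat list \<Rightarrow> nat list" where
  "global_map l r f b n xs =
     map (\<lambda>i. f (map (\<lambda>j. cell b n xs (int i - int l + int j)) [0..<l + 1 + r])) [0..<n]"

definition cell_reversible :: "nat \<Rightarrow> nat \<Rightarrow> nat \<Rightarrow> (nat list \<Rightarrow> nat) \<Rightarrow> boundary \<Rightarrow> nat \<Rightarrow> bool" where
  "cell_reversible s l r f b n \<longleftrightarrow>
     bij_betw (global_map l r f b n) (words s n) (words s n)"

text \<open>Edges: for each vertex N and each label c < s an edge labelled c from N to delta N c.\<close>

inductive_set rg_vertices :: "nat \<Rightarrow> 'v \<Rightarrow> ('v \<Rightarrow> nat \<Rightarrow> 'v) \<Rightarrow> 'v set"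
  for s :: nat and N0 :: 'v and delta :: "'v \<Rightarrow> nat \<Rightarrow> 'v" where
  root: "N0 \<in> rg_vertices s N0 delta"
| step: "N \<in> rg_vertices s N0 delta \<Longrightarrow> c < s \<Longrightarrow> delta N c \<in> rg_vertices s N0 delta"

definition run :: "('v \<Rightarrow> nat \<Rightarrow> 'v) \<Rightarrow> 'v \<Rightarrow> nat list \<Rightarrow> 'v" where
  "run delta N cs = fold (\<lambda>c M. delta M c) cs N"

definition rg_value :: "nat \<Rightarrow> 'v \<Rightarrow> ('v \<Rightarrow> nat \<Rightarrow> 'v) \<Rightarrow> 'v \<Rightarrow> nat" where
  "rg_value s N0 delta N =
     (LEAST k. \<exists>cs. length cs = k \<and> set cs \<subseteq> {..<s} \<and> run delta N0 cs = N)"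

definition circuit_through :: "nat \<Rightarrow> 'v \<Rightarrow> ('v \<Rightarrow> nat \<Rightarrow> 'v) \<Rightarrow> 'v \<Rightarrow> nat \<Rightarrow> bool" where
  "circuit_through s N0 delta N L \<longleftrightarrow>
     (\<exists>v :: nat \<Rightarrow> 'v. 1 \<le> L \<and> v L = v 0 \<and> inj_on v {0..<L}
        \<and> (\<forall>i \<le> L. v i \<in> rg_vertices s N0 delta)
        \<and> (\<forall>i < L. \<exists>c < s. delta (v i) c = v (Suc i))
        \<and> (\<exists>j < L. v j = N))"

definition neg_vertex_circuit :: "nat \<Rightarrow> 'e set \<Rightarrow> ('e set \<Rightarrow> nat \<Rightarrow> 'e set) \<Rightarrow> 'e set \<Rightarrow> nat \<Rightarrow> nat \<Rightarrow> bool" where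
  "neg_vertex_circuit s N0 delta R k L \<longleftrightarrow>
     (\<exists>N. N \<in> rg_vertices s N0 delta \<and> N \<inter> R = {} \<and> rg_value s N0 delta N = k
          \<and> circuit_through s N0 delta N L)"

definition null_root :: "nat \<Rightarrow> nat \<Rightarrow> nat \<Rightarrow> nat list set" where
  "null_root s l r = {a \<in> words s (l + r). \<forall>i < l. a ! i = 0}"

definition null_acc :: "nat \<Rightarrow> nat \<Rightarrow> nat \<Rightarrow> nat list set" where
  "null_acc s l r = {a \<in> words s (l + r). \<forall>i. l \<le> i \<and> i < l + r \<longrightarrow> a ! i = 0}"

definition null_delta :: "nat \<Rightarrow> nat \<Rightarrow> nat \<Rightarrow> (nat list \<Rightarrow> nat) \<Rightarrow> nat list set \<Rightarrow> nat \<Rightarrow> nat list set" where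
  "null_delta s l r f N c =
     {a \<in> words s (l + r). \<exists>a0 < s. (a0 # butlast a) \<in> N \<and> f (a0 # a) = c}"

definition per_root :: "nat \<Rightarrow> nat \<Rightarrow> nat \<Rightarrow> (nat list \<times> nat list) set" where
  "per_root s l r = {(a, a) | a. a \<in> words s (l + r)}"

definition per_delta :: "nat \<Rightarrow> nat \<Rightarrow> nat \<Rightarrow> (nat list \<Rightarrow> nat) \<Rightarrow>
    (nat list \<times> nat list) set \<Rightarrow> nat \<Rightarrow> (nat list \<times> nat list) set" where
  "per_delta s l r f N c =
     {(a, bs). a \<in> words s (l + r) \<and> bs \<in> words s (l + r) \<and>
        (\<exists>b0 < s. (a, b0 # butlast bs) \<in> N \<and> f (b0 # bs) = c)}"

fun rg_neg_vertex_circuit :: "nat \<Rightarrow> nat \<Rightarrow> nat \<Rightarrow> (nat list \<Rightarrow> nat) \<Rightarrow> boundary \<Rightarrow> nat \<Rightarrow> nat \<Rightarrow> bool" where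
  "rg_neg_vertex_circuit s l r f Null k L =
     neg_vertex_circuit s (null_root s l r) (null_delta s l r f) (null_acc s l r) k L"
| "rg_neg_vertex_circuit s l r f Periodic k L =
     neg_vertex_circuit s (per_root s l r) (per_delta s l r f) (per_root s l r) k L"

end

theory Submission
  imports Defs
begin

lemma run_append: "run d N (xs @ ys) = run d (run d N xs) ys"
  by (simp add: run_def)

lemma run_single: "run d N [c] = d N c"
  by (simp add: run_def)

lemma run_Nil: "run d N [] = N"
  by (simp add: run_def)

lemma run_rep: "run d N ds = N \<Longrightarrow> run d N (concat (replicate x ds)) = N"
  by (induction x) (simp_all add: run_append run_Nil)

lemma rg_path: "N \<in> rg_vertices s N0 d \<Longrightarrow> \<exists>cs. set cs \<subseteq> {..<s} \<and> run d N0 cs = N"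
proof (induction rule: rg_vertices.induct)
  case root
  then show ?case by (intro exI[of _ "[]"]) (simp add: run_Nil)
next
  case (step N c)
  then obtain cs where "set cs \<subseteq> {..<s}" "run d N0 cs = N" by blast
  then show ?case using step by (intro exI[of _ "cs @ [c]"]) (auto simp: run_append run_single)
qed

lemma value_path: "N \<in> rg_vertices s N0 d \<Longrightarrow>
   \<exists>cs. length cs = rg_value s N0 d N \<and> set cs \<subseteq> {..<s} \<and> run d N0 cs = N"
proof -
  assume a: "N \<in> rg_vertices s N0 d"
  obtain cs where cs: "set cs \<subseteq> {..<s}" "run d N0 cs = N" using rg_path[OF a] by (elim exE conjE)
  let ?P = "\<lambda>k. \<exists>cs. length cs = k \<and> set cs \<subseteq> {..<s} \<and> run d N0 cs = N"
  have "?P (length cs)" using cs by (intro exI[of _ cs]) simp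
  then have "?P (LEAST k. ?P k)" by (rule LeastI)
  then show ?thesis unfolding rg_value_def .
qed

lemma seg_path:
  assumes "\<forall>i < L. \<exists>c < s. d (v i) c = v (Suc i)"
  shows "a \<le> b \<Longrightarrow> b \<le> L \<Longrightarrow> \<exists>ds. length ds = b - a \<and> set ds \<subseteq> {..<s} \<and> run d (v a) ds = v b"
proof (induction b)
  case 0
  then show ?case by (intro exI[of _ "[]"]) (simp add: run_Nil)
next
  case (Suc b)
  show ?case
  proof (cases "a = Suc b")
    case True
    then show ?thesis by (intro exI[of _ "[]"]) (simp add: run_Nil)
  next
    case False
    then have "a \<le> b" "b \<le> L" "b < L" using Suc.prems by auto
    then obtain ds where ds: "length ds = b - a" "set ds \<subseteq> {..<s}" "run d (v a) ds = v b"
      using Suc.IH by blast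
    obtain c where c: "c < s" "d (v b) c = v (Suc b)" using assms \<open>b < L\<close> by blast
    show ?thesis using ds c \<open>a \<le> b\<close>
      by (intro exI[of _ "ds @ [c]"]) (auto simp: run_append run_single Suc_diff_le)
  qed
qed

lemma cycle_path: "circuit_through s N0 d N L \<Longrightarrow>
   \<exists>ds. length ds = L \<and> set ds \<subseteq> {..<s} \<and> run d N ds = N"
proof -
  assume "circuit_through s N0 d N L"
  then obtain v j where v: "v L = v 0" "\<forall>i < L. \<exists>c < s. d (v i) c = v (Suc i)" "j < L" "v j = N"
    unfolding circuit_through_def by blast
  obtain d1 where d1: "length d1 = L - j" "set d1 \<subseteq> {..<s}" "run d (v j) d1 = v L"
    using seg_path[OF v(2), of j L] v(3) by auto
  obtain d2 where d2: "length d2 = j - 0" "set d2 \<subseteq> {..<s}" "run d (v 0) d2 = v j"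
    using seg_path[OF v(2), of 0 j] v(3) by auto
  show ?thesis using d1 d2 v
    by (intro exI[of _ "d1 @ d2"]) (auto simp: run_append)
qed

lemma neg_word: "neg_vertex_circuit s N0 d R k L \<Longrightarrow>
   \<exists>y. length y = k + x * L \<and> set y \<subseteq> {..<s} \<and> run d N0 y \<inter> R = {}"
proof -
  assume "neg_vertex_circuit s N0 d R k L"
  then obtain N where N: "N \<in> rg_vertices s N0 d" "N \<inter> R = {}" "rg_value s N0 d N = k"
    "circuit_through s N0 d N L" unfolding neg_vertex_circuit_def by blast
  obtain cs where cs: "length cs = k" "set cs \<subseteq> {..<s}" "run d N0 cs = N"
    using value_path[OF N(1)] N(3) by auto
  obtain ds where ds: "length ds = L" "set ds \<subseteq> {..<s}" "run d N ds = N"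
    using cycle_path[OF N(4)] by blast
  have len: "length (concat (replicate x ds)) = x * L" using ds(1)
    by (simp add: length_concat sum_list_replicate)
  show ?thesis using cs ds N(2) len
    by (intro exI[of _ "cs @ concat (replicate x ds)"]) (auto simp: run_append run_rep)
qed

definition win :: "boundary \<Rightarrow> nat \<Rightarrow> nat list \<Rightarrow> int \<Rightarrow> nat \<Rightarrow> nat list" where
  "win b n xs p len = map (\<lambda>j. cell b n xs (p + int j)) [0..<len]"

lemma length_win[simp]: "length (win b n xs p len) = len"
  by (simp add: win_def)

lemma nth_win: "j < len \<Longrightarrow> win b n xs p len ! j = cell b n xs (p + int j)"
  by (simp add: win_def)

lemma win_Suc: "win b n xs p (Suc len) = cell b n xs p # win b n xs (p + 1) len"
  unfolding win_def map_upt_Suc by (simp add: algebra_simps)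

lemma butlast_win: "butlast (win b n xs p (Suc len)) = win b n xs p len"
  by (simp add: win_def)

lemma cell_lt:
  assumes "xs \<in> words s n" "0 < n" "0 < s"
  shows "cell b n xs j < s"
proof (cases b)
  case Null
  have "0 \<le> j \<Longrightarrow> j < int n \<Longrightarrow> xs ! nat j \<in> set xs"
    using assms(1) by (intro nth_mem) (auto simp: words_def)
  moreover have "set xs \<subseteq> {..<s}" using assms(1) by (simp add: words_def)
  ultimately show ?thesis using assms(3) Null by auto
next
  case Periodic
  have "nat (j mod int n) < n" using assms(2) by (simp add: nat_less_iff)
  then show ?thesis using assms Periodic
    by (auto simp: words_def dest!: nth_mem)
qed

lemma win_words: "xs \<in> words s n \<Longrightarrow> 0 < n \<Longrightarrow> 0 < s \<Longrightarrow> win b n xs p len \<in> words s len"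
  by (auto simp: words_def win_def cell_lt)

lemma gm_nth: "i < n \<Longrightarrow> global_map l r f b n xs ! i = f (win b n xs (int i - int l) (l + 1 + r))"
  by (simp add: global_map_def win_def)

lemma gm_len: "length (global_map l r f b n xs) = n"
  by (simp add: global_map_def)

lemma null_delta_I: "a \<in> words s (l + r) \<Longrightarrow> a0 < s \<Longrightarrow> a0 # butlast a \<in> N \<Longrightarrow> f (a0 # a) = c
  \<Longrightarrow> a \<in> null_delta s l r f N c"
  unfolding null_delta_def by blast

lemma per_delta_I: "a \<in> words s (l + r) \<Longrightarrow> bs \<in> words s (l + r) \<Longrightarrow> b0 < s \<Longrightarrow>
  (a, b0 # butlast bs) \<in> N \<Longrightarrow> f (b0 # bs) = c
  \<Longrightarrow> (a, bs) \<in> per_delta s l r f N c"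
  unfolding per_delta_def by blast

lemma null_inv:
  assumes v: "valid_fca s l r f" and xs: "xs \<in> words s n" and n: "0 < n"
  shows "i \<le> n \<Longrightarrow> win Null n xs (int i - int l) (l + r)
     \<in> run (null_delta s l r f) (null_root s l r) (take i (global_map l r f Null n xs))"
proof (induction i)
  case 0
  have s: "0 < s" using v by (simp add: valid_fca_def)
  show ?case
    using win_words[OF xs n s] by (auto simp: run_Nil null_root_def nth_win)
next
  case (Suc i)
  have s: "0 < s" using v by (simp add: valid_fca_def)
  obtain q where q: "l + r = Suc q" using v by (cases "l + r") (auto simp: valid_fca_def)
  define p where "p = int i - int l"
  have p1: "int (Suc i) - int l = p + 1" by (simp add: p_def)
  have "i < n" using Suc.prems by simp
  let ?y = "global_map l r f Null n xs"
  have tk: "take (Suc i) ?y = take i ?y @ [?y ! i]"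
    using \<open>i < n\<close> by (simp add: take_Suc_conv_app_nth gm_len)
  have IH: "win Null n xs p (l + r) \<in> run (null_delta s l r f) (null_root s l r) (take i ?y)"
    using Suc by (simp add: p_def)
  have e1: "cell Null n xs p # butlast (win Null n xs (p + 1) (l + r)) = win Null n xs p (l + r)"
    using win_Suc[of Null n xs p q] by (simp only: q butlast_win)
  have e2: "f (cell Null n xs p # win Null n xs (p + 1) (l + r)) = ?y ! i"
  proof -
    have "?y ! i = f (win Null n xs p (Suc (l + r)))"
      using \<open>i < n\<close> by (simp add: gm_nth p_def)
    then show ?thesis by (simp only: win_Suc)
  qed
  have "win Null n xs (p + 1) (l + r) \<in> null_delta s l r f
      (run (null_delta s l r f) (null_root s l r) (take i ?y)) (?y ! i)"
    by (rule null_delta_I[where l=l and r=r and s=s and f=f, OF win_words[OF xs n s, of Null "p + 1" "l + r"] cell_lt[OF xs n s, of Null p] _ e2]) (simp only: e1 IH)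
  then show ?case unfolding tk run_append run_single p1 .
qed

lemma null_accept:
  assumes v: "valid_fca s l r f" and xs: "xs \<in> words s n" and n: "0 < n"
  shows "run (null_delta s l r f) (null_root s l r) (global_map l r f Null n xs) \<inter> null_acc s l r \<noteq> {}"
proof -
  have s: "0 < s" using v by (simp add: valid_fca_def)
  have "win Null n xs (int n - int l) (l + r) \<in> run (null_delta s l r f) (null_root s l r) (global_map l r f Null n xs)"
    using null_inv[OF v xs n, of n] by (simp add: gm_len)
  moreover have "win Null n xs (int n - int l) (l + r) \<in> null_acc s l r"
    using win_words[OF xs n s] by (auto simp: null_acc_def nth_win)
  ultimately show ?thesis by blast
qed

lemma per_inv:
  assumes v: "valid_fca s l r f" and xs: "xs \<in> words s n" and n: "0 < n"
  shows "i \<le> n \<Longrightarrow> (win Periodic n xs (- int l) (l + r), win Periodic n xs (int i - int l) (l + r))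
     \<in> run (per_delta s l r f) (per_root s l r) (take i (global_map l r f Periodic n xs))"
proof (induction i)
  case 0
  have s: "0 < s" using v by (simp add: valid_fca_def)
  show ?case
    using win_words[OF xs n s] by (auto simp: run_Nil per_root_def)
next
  case (Suc i)
  have s: "0 < s" using v by (simp add: valid_fca_def)
  obtain q where q: "l + r = Suc q" using v by (cases "l + r") (auto simp: valid_fca_def)
  define p where "p = int i - int l"
  have p1: "int (Suc i) - int l = p + 1" by (simp add: p_def)
  have "i < n" using Suc.prems by simp
  let ?y = "global_map l r f Periodic n xs"
  let ?w0 = "win Periodic n xs (- int l) (l + r)"
  have tk: "take (Suc i) ?y = take i ?y @ [?y ! i]"
    using \<open>i < n\<close> by (simp add: take_Suc_conv_app_nth gm_len)
  have IH: "(?w0, win Periodic n xs p (l + r)) \<in> run (per_delta s l r f) (per_root s l r) (take i ?y)"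
    using Suc by (simp add: p_def)
  have e1: "cell Periodic n xs p # butlast (win Periodic n xs (p + 1) (l + r)) = win Periodic n xs p (l + r)"
    using win_Suc[of Periodic n xs p q] by (simp only: q butlast_win)
  have e2: "f (cell Periodic n xs p # win Periodic n xs (p + 1) (l + r)) = ?y ! i"
  proof -
    have "?y ! i = f (win Periodic n xs p (Suc (l + r)))"
      using \<open>i < n\<close> by (simp add: gm_nth p_def)
    then show ?thesis by (simp only: win_Suc)
  qed
  have "(?w0, win Periodic n xs (p + 1) (l + r)) \<in> per_delta s l r f
      (run (per_delta s l r f) (per_root s l r) (take i ?y)) (?y ! i)"
    by (rule per_delta_I[where l=l and r=r and s=s and f=f, OF win_words[OF xs n s, of Periodic "- int l" "l + r"] win_words[OF xs n s, of Periodic "p + 1" "l + r"] cell_lt[OF xs n s, of Periodic p] _ e2]) (simp only: e1 IH)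
  then show ?case unfolding tk run_append run_single p1 .
qed

lemma per_accept:
  assumes v: "valid_fca s l r f" and xs: "xs \<in> words s n" and n: "0 < n"
  shows "run (per_delta s l r f) (per_root s l r) (global_map l r f Periodic n xs) \<inter> per_root s l r \<noteq> {}"
proof -
  have s: "0 < s" using v by (simp add: valid_fca_def)
  have eq: "win Periodic n xs (int n - int l) (l + r) = win Periodic n xs (- int l) (l + r)"
  proof -
    have "\<And>j. (int n - int l + int j) mod int n = (- int l + int j) mod int n"
      by (metis add.commute add_diff_eq diff_add_eq mod_add_self2 uminus_add_conv_diff)
    then show ?thesis by (simp add: win_def)
  qed
  have "(win Periodic n xs (- int l) (l + r), win Periodic n xs (int n - int l) (l + r))
     \<in> run (per_delta s l r f) (per_root s l r) (global_map l r f Periodic n xs)"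
    using per_inv[OF v xs n, of n] by (simp add: gm_len)
  moreover have "(win Periodic n xs (- int l) (l + r), win Periodic n xs (int n - int l) (l + r)) \<in> per_root s l r"
    using win_words[OF xs n s] eq by (auto simp: per_root_def)
  ultimately show ?thesis by blast
qed

theorem theorem2:
  fixes s l r :: nat and f :: "nat list \<Rightarrow> nat" and b :: boundary
    and k r' x :: nat
  assumes "valid_fca s l r f"
    and "rg_neg_vertex_circuit s l r f b k r'"
    and "1 \<le> k"
  shows "\<not> cell_reversible s l r f b (k + x * r')"
proof
  assume rev: "cell_reversible s l r f b (k + x * r')"
  define n where "n = k + x * r'"
  have n: "0 < n" using assms(3) by (simp add: n_def)
  have img: "global_map l r f b n ` words s n = words s n"
    using rev by (simp add: cell_reversible_def bij_betw_def n_def)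
  show False
  proof (cases b)
    case Null
    obtain y where y: "length y = n" "set y \<subseteq> {..<s}"
      "run (null_delta s l r f) (null_root s l r) y \<inter> null_acc s l r = {}"
      using neg_word[of s "null_root s l r" "null_delta s l r f" "null_acc s l r" k r' x] assms(2) Null
      by (auto simp: n_def)
    have "y \<in> words s n" using y by (auto simp: words_def)
    then obtain xs where "xs \<in> words s n" "y = global_map l r f b n xs" using img by force
    then show False using null_accept[OF assms(1) _ n] y Null by auto
  next
    case Periodic
    obtain y where y: "length y = n" "set y \<subseteq> {..<s}"
      "run (per_delta s l r f) (per_root s l r) y \<inter> per_root s l r = {}"
      using neg_word[of s "per_root s l r" "per_delta s l r f" "per_root s l r" k r' x] assms(2) Periodic
      by (auto simp: n_def)
    have "y \<in> words s n" using y by (auto simp: words_def)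
    then obtain xs where "xs \<in> words s n" "y = global_map l r f b n xs" using img by force
    then show False using per_accept[OF assms(1) _ n] y Periodic by auto
  qed
qed

end
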